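(* Let $k\ge2$ and $\sigma_i=\frac{i(k-i)}2$ for $i=0,\dots,k$. For $\boldsymbol\xi=(\xi_1,\dots,\xi_k)\in\mathbb{R}^k$ set $b_1=b_{k+1}=0$ and $b_i=\sigma_{i-1}\big(e^{-(\xi_i-\xi_{i-1})}-1\big)$ for $i=2,\dots,k$, and consider the system $\dot\xi_i=b_i-b_{i+1}$, $i=1,\dots,k$. Then: (a) the only critical point of this system on the hyperplane $\{\sum_{i=1}^k\xi_i=0\}$ is $\boldsymbol\xi=0$; (b) for any solution $\boldsymbol\xi(\tau)$ on its maximal interval $[0,\tau_\infty)$ with $\sum_{i=1}^k\xi_i(0)=0$, the functions $B(\tau)=\max\{b_i(\tau):1\le i\le k+1\}$ and $-b(\tau)$, where $b(\tau)=\min\{b_i(\tau):1\le i\le k+1\}$, are nonincreasing in $\tau$; moreover $B-b$ is strictly decreasing, unless $\xi_1\equiv\dots\equiv\xi_k\equiv0$. *)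

theory Defs
  imports "HOL-Analysis.Analysis"
begin

text \<open>Vectors \<xi> = (\<xi>_1,...,\<xi>_k) in R^k are represented as functions nat => real,
  only the values at indices 1..k being relevant.\<close>

definition sigma :: "nat \<Rightarrow> nat \<Rightarrow> real" where
  "sigma k i = real i * (real k - real i) / 2"

definition bcoef :: "nat \<Rightarrow> (nat \<Rightarrow> real) \<Rightarrow> nat \<Rightarrow> real" where
  "bcoef k \<xi> i =
     (if 2 \<le> i \<and> i \<le> k then sigma k (i - 1) * (exp (- (\<xi> i - \<xi> (i - 1))) - 1) else 0)"

definition vfield :: "nat \<Rightarrow> (nat \<Rightarrow> real) \<Rightarrow> nat \<Rightarrow> real" where
  "vfield k \<xi> i = bcoef k \<xi> i - bcoef k \<xi> (i + 1)"

definition critical_point :: "nat \<Rightarrow> (nat \<Rightarrow> real) \<Rightarrow> bool" where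
  "critical_point k \<xi> \<longleftrightarrow> (\<forall>i\<in>{1..k}. vfield k \<xi> i = 0)"

definition tint :: "ereal \<Rightarrow> real set" where
  "tint T = {t. 0 \<le> t \<and> ereal t < T}"

definition is_solution :: "nat \<Rightarrow> ereal \<Rightarrow> (real \<Rightarrow> nat \<Rightarrow> real) \<Rightarrow> bool" where
  "is_solution k T \<xi> \<longleftrightarrow> 0 < T \<and>
     (\<forall>t\<in>tint T. \<forall>i\<in>{1..k}.
        ((\<lambda>s. \<xi> s i) has_real_derivative vfield k (\<xi> t) i) (at t within tint T))"

definition is_maximal_solution :: "nat \<Rightarrow> ereal \<Rightarrow> (real \<Rightarrow> nat \<Rightarrow> real) \<Rightarrow> bool" where
  "is_maximal_solution k T \<xi> \<longleftrightarrow> is_solution k T \<xi> \<and>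
     \<not> (\<exists>T' \<eta>. T < T' \<and> is_solution k T' \<eta> \<and>
            (\<forall>t\<in>tint T. \<forall>i\<in>{1..k}. \<eta> t i = \<xi> t i))"

definition Bmax :: "nat \<Rightarrow> (nat \<Rightarrow> real) \<Rightarrow> real" where
  "Bmax k \<xi> = Max ((\<lambda>i. bcoef k \<xi> i) ` {1..k+1})"

definition bmin :: "nat \<Rightarrow> (nat \<Rightarrow> real) \<Rightarrow> real" where
  "bmin k \<xi> = Min ((\<lambda>i. bcoef k \<xi> i) ` {1..k+1})"

end

theory Submission
  imports Defs
begin


lemma max_noninc:
  fixes f :: "nat \<Rightarrow> real \<Rightarrow> real" and M :: "real \<Rightarrow> real"
  assumes fin: "finite J" and st: "s \<le> t"
    and cont: "\<forall>j\<in>J. continuous_on {s..t} (f j)"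
    and le: "\<forall>\<tau>\<in>{s..t}. \<forall>j\<in>J. f j \<tau> \<le> M \<tau>"
    and att: "\<forall>\<tau>\<in>{s..t}. \<exists>j\<in>J. f j \<tau> = M \<tau>"
    and der: "\<forall>\<tau>\<in>{s..<t}. \<forall>j\<in>J. f j \<tau> = M \<tau> \<longrightarrow>
               (\<exists>D\<le>0. (f j has_real_derivative D) (at \<tau> within {s..t}))"
  shows "M t \<le> M s"
proof (rule ccontr)
  assume neg: "\<not> M t \<le> M s"
  hence st': "s < t" using st by (cases "s = t") auto
  define \<delta> where "\<delta> = (M t - M s) / (2 * (t - s))"
  have dpos: "\<delta> > 0" using neg st' by (simp add: \<delta>_def)
  define g where "g \<tau> = M s + \<delta> * (\<tau> - s)" for \<tau>
  have "\<delta> * (t - s) = (M t - M s) / 2" using st' by (simp add: \<delta>_def field_simps)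
  hence gt: "g t < M t" using neg by (simp add: g_def)
  define S where "S = {\<tau>\<in>{s..t}. \<forall>j\<in>J. f j \<tau> \<le> g \<tau>}"
  have cj: "closed ({s..t} \<inter> (\<lambda>\<tau>. f j \<tau> - g \<tau>) -` {..0})" if "j \<in> J" for j
  proof -
    have "continuous_on {s..t} (\<lambda>\<tau>. f j \<tau> - g \<tau>)"
      using cont \<open>j\<in>J\<close> unfolding g_def by (intro continuous_intros) auto
    thus ?thesis by (intro continuous_closed_preimage) auto
  qed
  have "S = {s..t} \<inter> (\<Inter>j\<in>J. {s..t} \<inter> (\<lambda>\<tau>. f j \<tau> - g \<tau>) -` {..0})"
    unfolding S_def by auto
  moreover have "closed (\<Inter>j\<in>J. {s..t} \<inter> (\<lambda>\<tau>. f j \<tau> - g \<tau>) -` {..0})"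
    using cj by (intro closed_INT) blast
  ultimately have Sclosed: "closed S" by (metis closed_Int closed_atLeastAtMost)
  have Smem: "\<tau> \<in> S \<longleftrightarrow> \<tau> \<in> {s..t} \<and> M \<tau> \<le> g \<tau>" for \<tau>
  proof
    assume "\<tau> \<in> S"
    hence "\<tau> \<in> {s..t}" and "\<forall>j\<in>J. f j \<tau> \<le> g \<tau>" unfolding S_def by auto
    thus "\<tau> \<in> {s..t} \<and> M \<tau> \<le> g \<tau>" using att by fastforce
  next
    assume "\<tau> \<in> {s..t} \<and> M \<tau> \<le> g \<tau>"
    thus "\<tau> \<in> S" using le unfolding S_def by fastforce
  qed
  have sS: "s \<in> S" using st by (simp add: Smem g_def)
  define c where "c = Sup S"
  have bdd: "bdd_above S" using Smem by (intro bdd_aboveI[of _ t]) auto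
  have cS: "c \<in> S" unfolding c_def using closed_contains_Sup[OF _ bdd Sclosed] sS by auto
  have ub: "\<tau> \<in> S \<Longrightarrow> \<tau> \<le> c" for \<tau> unfolding c_def using bdd by (simp add: cSup_upper)
  have "c \<noteq> t" using cS gt Smem by force
  hence ct: "c < t" using cS Smem by auto
  have cst: "c \<in> {s..t}" and Mc: "M c \<le> g c" using cS Smem by auto
  define F where "F = at c within {c<..t}"
  have Fnt: "F \<noteq> bot" unfolding F_def using ct
    by (simp add: at_within_eq_bot_iff)
  have ev: "\<forall>j\<in>J. eventually (\<lambda>\<tau>. f j \<tau> \<le> g \<tau>) F"
  proof
    fix j assume jJ: "j \<in> J"
    have fle: "f j c \<le> g c" using le cst jJ Mc by force
    show "eventually (\<lambda>\<tau>. f j \<tau> \<le> g \<tau>) F"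
    proof (cases "f j c < g c")
      case True
      have "continuous (at c within {s..t}) (\<lambda>\<tau>. f j \<tau> - g \<tau>)"
        using cont jJ cst unfolding g_def
        by (intro continuous_intros) (auto simp: continuous_on_eq_continuous_within)
      hence "((\<lambda>\<tau>. f j \<tau> - g \<tau>) \<longlongrightarrow> f j c - g c) (at c within {s..t})"
        by (simp add: continuous_within)
      hence "((\<lambda>\<tau>. f j \<tau> - g \<tau>) \<longlongrightarrow> f j c - g c) F"
        unfolding F_def by (rule tendsto_within_subset) (use cst in auto)
      hence "eventually (\<lambda>\<tau>. f j \<tau> - g \<tau> < 0) F"
        using True by (intro order_tendstoD) auto
      thus ?thesis by eventually_elim auto
    next
      case False
      hence eq: "f j c = g c" using fle by auto
      hence "f j c = M c" using Mc le cst jJ by force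
      then obtain D where D: "D \<le> 0" "(f j has_real_derivative D) (at c within {s..t})"
        using der cst ct jJ by force
      hence "(f j has_real_derivative D) (at c within {c<..t})"
        using cst by (elim DERIV_subset) auto
      hence "((\<lambda>y. (f j y - f j c) / (y - c)) \<longlongrightarrow> D) F"
        unfolding F_def by (simp add: has_field_derivative_iff)
      hence "eventually (\<lambda>y. (f j y - f j c) / (y - c) < \<delta>) F"
        using D dpos by (elim order_tendstoD) auto
      moreover have "eventually (\<lambda>y. y \<in> {c<..t}) F"
        unfolding F_def by (simp add: eventually_at_filter)
      ultimately show ?thesis
      proof eventually_elim
        case (elim y)
        hence "f j y - f j c < \<delta> * (y - c)" by (simp add: pos_divide_less_eq)
        thus ?case using eq unfolding g_def by (simp add: algebra_simps)
      qed
    qed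
  qed
  have "eventually (\<lambda>\<tau>. (\<forall>j\<in>J. f j \<tau> \<le> g \<tau>) \<and> \<tau> \<in> {c<..t}) F"
    using eventually_ball_finite[OF fin ev] unfolding F_def
    by (intro eventually_conj) (auto simp: eventually_at_filter)
  then obtain \<tau> where tau: "\<forall>j\<in>J. f j \<tau> \<le> g \<tau>" "\<tau> \<in> {c<..t}"
    using eventually_happens Fnt by blast
  have "\<tau> \<in> {s..t}" using tau cst by auto
  hence "M \<tau> \<le> g \<tau>" using att tau by fastforce
  hence "\<tau> \<in> S" using Smem \<open>\<tau> \<in> {s..t}\<close> by auto
  thus False using ub tau by force
qed



lemma sigma_pos: "2 \<le> i \<Longrightarrow> i \<le> k \<Longrightarrow> sigma k (i - 1) > 0"
  unfolding sigma_def by (auto simp: of_nat_diff)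

lemma sigma_nonneg: "i \<le> k \<Longrightarrow> 0 \<le> sigma k i"
  unfolding sigma_def by auto

lemma sigma_le: "i \<le> k \<Longrightarrow> sigma k i \<le> real k * real k"
proof -
  assume "i \<le> k"
  hence "real i \<le> real k" "real k - real i \<le> real k" "0 \<le> real k - real i" by auto
  hence "real i * (real k - real i) \<le> real k * real k" by (intro mult_mono) auto
  moreover have "0 \<le> real k * real k" by simp
  ultimately show ?thesis unfolding sigma_def by linarith
qed

lemma bcoef_out: "\<not> (2 \<le> i \<and> i \<le> k) \<Longrightarrow> bcoef k x i = 0"
  unfolding bcoef_def by auto

lemma bcoef_zero_iff: "2 \<le> i \<Longrightarrow> i \<le> k \<Longrightarrow> bcoef k x i = 0 \<longleftrightarrow> x i = x (i - 1)"
proof -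
  assume a: "2 \<le> i" "i \<le> k"
  have e: "bcoef k x i = sigma k (i - 1) * (exp (- (x i - x (i - 1))) - 1)"
    using a unfolding bcoef_def by simp
  have s: "sigma k (i - 1) \<noteq> 0" using sigma_pos[OF a] by auto
  have "bcoef k x i = 0 \<longleftrightarrow> exp (- (x i - x (i - 1))) - 1 = 0" unfolding e using s by simp
  also have "\<dots> \<longleftrightarrow> exp (- (x i - x (i - 1))) = exp 0" by simp
  also have "\<dots> \<longleftrightarrow> - (x i - x (i - 1)) = 0" by (rule exp_inj_iff)
  also have "\<dots> \<longleftrightarrow> x i = x (i - 1)" by linarith
  finally show ?thesis .
qed

lemma const_of_bzero:
  assumes "\<forall>i\<in>{2..k}. bcoef k x i = 0"
  shows "\<forall>i\<in>{1..k}. x i = x 1"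
proof -
  have "1 \<le> i \<Longrightarrow> i \<le> k \<Longrightarrow> x i = x 1" for i
  proof (induction i)
    case 0 thus ?case by simp
  next
    case (Suc i)
    show ?case
    proof (cases "i = 0")
      case True thus ?thesis by simp
    next
      case False
      hence "1 \<le> i" "i \<le> k" using Suc.prems by auto
      hence ih: "x i = x 1" by (rule Suc.IH)
      have mem: "Suc i \<in> {2..k}" using False Suc.prems by auto
      hence "bcoef k x (Suc i) = 0" using assms by blast
      moreover have "2 \<le> Suc i" "Suc i \<le> k" using mem by auto
      ultimately have "x (Suc i) = x (Suc i - 1)" using bcoef_zero_iff[of "Suc i" k x] by blast
      hence "x (Suc i) = x i" by simp
      thus ?thesis using ih by (rule trans)
    qed
  qed
  note h = this
  show ?thesis
  proof
    fix i assume i: "i \<in> {1..k}"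
    show "x i = x 1" by (rule h) (use i in simp)+
  qed
qed

lemma zero_of_const:
  fixes k :: nat
  assumes c: "\<forall>i\<in>{1..k}. x i = x 1" and sm: "(\<Sum>i=1..k. x i) = (0::real)" and k: "k \<ge> 1"
  shows "\<forall>i\<in>{1..k}. x i = 0"
proof -
  have "(\<Sum>i=1..k. x i) = (\<Sum>i=1..k. x 1)"
    by (rule sum.cong) (use c in blast)+
  hence "real k * x 1 = 0" using sm by simp
  hence x1: "x 1 = 0" using k by simp
  show ?thesis
  proof
    fix i assume "i \<in> {1..k}"
    hence "x i = x 1" using c by blast
    thus "x i = 0" using x1 by (rule trans)
  qed
qed

definition cc :: "nat \<Rightarrow> (nat \<Rightarrow> real) \<Rightarrow> nat \<Rightarrow> real" where
  "cc k x i = (if 2 \<le> i \<and> i \<le> k then bcoef k x i + sigma k (i - 1) else 0)"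

lemma cc_alt: "2 \<le> i \<Longrightarrow> i \<le> k \<Longrightarrow> cc k x i = sigma k (i - 1) * exp (- (x i - x (i - 1)))"
  unfolding cc_def bcoef_def by (simp add: algebra_simps)

lemma cc_pos: "2 \<le> i \<Longrightarrow> i \<le> k \<Longrightarrow> cc k x i > 0"
  using cc_alt sigma_pos by auto

lemma cc_nonneg: "0 \<le> cc k x i"
  using cc_pos[of i k x] unfolding cc_def by (cases "2 \<le> i \<and> i \<le> k") auto

lemma cc_le: "bcoef k x i \<le> K \<Longrightarrow> 0 \<le> K \<Longrightarrow> cc k x i \<le> K + real k * real k"
  unfolding cc_def using sigma_le[of "i - 1" k] by (auto simp: add_mono)

lemma telescope: "(\<Sum>i=1..n. (f i - f (Suc i))) = f 1 - f (Suc n)" for f :: "nat \<Rightarrow> real"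
  by (induction n) auto

lemma shift_up: "(\<Sum>i=1..n. g (Suc i)) = (\<Sum>i=1..n. g i) - g 1 + g (Suc n)" for g :: "nat \<Rightarrow> real"
  by (induction n) auto

lemma shift_down: "(\<Sum>i=1..n. g (i - 1)) = (\<Sum>i=1..n. g i) + g 0 - g n" for g :: "nat \<Rightarrow> real"
  by (induction n) auto

lemma term_bound:
  fixes b c p q L :: real
  assumes "0 \<le> c" "c \<le> L"
  shows "2 * b * (c * (p - 2 * b + q)) \<ge> - (L * (6 * b\<^sup>2 + p\<^sup>2 + q\<^sup>2))"
proof -
  have h1: "2 * b * p \<ge> - (b\<^sup>2 + p\<^sup>2)" using sum_squares_ge_zero[of b p]
    by (smt (verit) power2_eq_square power2_sum zero_le_power2)
  have h2: "2 * b * q \<ge> - (b\<^sup>2 + q\<^sup>2)"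
    by (smt (verit) power2_eq_square power2_sum zero_le_power2)
  have "2 * b * (c * (p - 2 * b + q)) = c * (2*b*p) + c * (2*b*q) - c * (4 * b\<^sup>2)"
    by (simp add: algebra_simps power2_eq_square)
  also have "\<dots> \<ge> c * (- (b\<^sup>2 + p\<^sup>2)) + c * (- (b\<^sup>2 + q\<^sup>2)) - c * (4 * b\<^sup>2)"
    using h1 h2 assms by (intro diff_mono add_mono mult_left_mono) auto
  finally have "2 * b * (c * (p - 2 * b + q)) \<ge> - (c * (6 * b\<^sup>2 + p\<^sup>2 + q\<^sup>2))"
    by (simp add: algebra_simps)
  moreover have "c * (6 * b\<^sup>2 + p\<^sup>2 + q\<^sup>2) \<le> L * (6 * b\<^sup>2 + p\<^sup>2 + q\<^sup>2)"
    using assms by (intro mult_right_mono) auto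
  ultimately show ?thesis by linarith
qed

lemma Bmax_ge: "i \<in> {1..k+1} \<Longrightarrow> bcoef k x i \<le> Bmax k x"
  unfolding Bmax_def by (rule Max_ge) auto

lemma Bmax_att: "\<exists>i\<in>{1..k+1}. bcoef k x i = Bmax k x"
proof -
  have "Bmax k x \<in> (\<lambda>i. bcoef k x i) ` {1..k+1}" unfolding Bmax_def by (rule Max_in) auto
  thus ?thesis by auto
qed

lemma bmin_le: "i \<in> {1..k+1} \<Longrightarrow> bmin k x \<le> bcoef k x i"
  unfolding bmin_def by (rule Min_le) auto

lemma bmin_att: "\<exists>i\<in>{1..k+1}. bcoef k x i = bmin k x"
proof -
  have "bmin k x \<in> (\<lambda>i. bcoef k x i) ` {1..k+1}" unfolding bmin_def by (rule Min_in) auto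
  thus ?thesis by auto
qed

lemma Bmax_nonneg: "0 \<le> Bmax k x"
  using Bmax_ge[of 1 k x] bcoef_out[of 1 k x] by auto

lemma bmin_nonpos: "bmin k x \<le> 0"
  using bmin_le[of 1 k x] bcoef_out[of 1 k x] by auto



lemma tint_between: "s \<in> tint T \<Longrightarrow> t \<in> tint T \<Longrightarrow> s \<le> \<tau> \<Longrightarrow> \<tau> \<le> t \<Longrightarrow> \<tau> \<in> tint T"
  unfolding tint_def by (auto intro: order.strict_trans1[of "ereal \<tau>" "ereal t"])

lemma tint_sub: "s \<in> tint T \<Longrightarrow> t \<in> tint T \<Longrightarrow> {s..t} \<subseteq> tint T"
proof
  fix x assume s: "s \<in> tint T" and t: "t \<in> tint T" and "x \<in> {s..t}"
  hence "s \<le> x" "x \<le> t" by auto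
  thus "x \<in> tint T" by (rule tint_between[OF s t])
qed

lemma tint_at: "t \<in> tint T \<Longrightarrow> 0 < \<tau> \<Longrightarrow> \<tau> < t \<Longrightarrow> at \<tau> within tint T = at \<tau>"
  by (rule at_within_open_subset[of _ "{0<..<t}"])
     (auto simp: tint_def intro: le_less_trans[of _ "ereal t"])

lemma zero_tint: "is_solution k T \<xi> \<Longrightarrow> 0 \<in> tint T"
  unfolding is_solution_def tint_def by (auto simp: zero_ereal_def)

lemma deriv_b:
  assumes sol: "is_solution k T \<xi>" and tau: "\<tau> \<in> tint T"
  shows "((\<lambda>s. bcoef k (\<xi> s) i) has_real_derivative
     cc k (\<xi> \<tau>) i * (bcoef k (\<xi> \<tau>) (Suc i) - 2 * bcoef k (\<xi> \<tau>) i + bcoef k (\<xi> \<tau>) (i - 1)))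
     (at \<tau> within tint T)"
proof (cases "2 \<le> i \<and> i \<le> k")
  case True
  have eq: "(\<lambda>s. bcoef k (\<xi> s) i) = (\<lambda>s. sigma k (i - 1) * (exp (- (\<xi> s i - \<xi> s (i - 1))) - 1))"
    using True unfolding bcoef_def by auto
  have d1: "((\<lambda>s. \<xi> s i) has_real_derivative vfield k (\<xi> \<tau>) i) (at \<tau> within tint T)"
    using sol tau True unfolding is_solution_def by auto
  have "i - 1 \<in> {1..k}" using True by auto
  hence d2: "((\<lambda>s. \<xi> s (i - 1)) has_real_derivative vfield k (\<xi> \<tau>) (i - 1)) (at \<tau> within tint T)"
    using sol tau unfolding is_solution_def by blast
  have "((\<lambda>s. sigma k (i - 1) * (exp (- (\<xi> s i - \<xi> s (i - 1))) - 1)) has_real_derivative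
     sigma k (i - 1) * (exp (- (\<xi> \<tau> i - \<xi> \<tau> (i - 1))) * (- (vfield k (\<xi> \<tau>) i - vfield k (\<xi> \<tau>) (i - 1)))))
     (at \<tau> within tint T)"
    using d2 by (auto intro!: derivative_eq_intros d1 d2)
  moreover have "sigma k (i - 1) * (exp (- (\<xi> \<tau> i - \<xi> \<tau> (i - 1))) * (- (vfield k (\<xi> \<tau>) i - vfield k (\<xi> \<tau>) (i - 1))))
     = cc k (\<xi> \<tau>) i * (bcoef k (\<xi> \<tau>) (Suc i) - 2 * bcoef k (\<xi> \<tau>) i + bcoef k (\<xi> \<tau>) (i - 1))"
    using True by (simp add: cc_alt vfield_def algebra_simps)
  ultimately show ?thesis unfolding eq by simp
next
  case False
  have eq: "(\<lambda>s. bcoef k (\<xi> s) i) = (\<lambda>s. 0)" using False by (simp add: bcoef_out)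
  have "cc k (\<xi> \<tau>) i = 0" unfolding cc_def using False by presburger
  thus ?thesis unfolding eq by simp
qed

lemma cont_of_deriv:
  assumes "\<forall>x\<in>S. \<exists>D. (f has_real_derivative D) (at x within S)"
  shows "continuous_on S f"
  using assms DERIV_continuous continuous_on_eq_continuous_within by blast

lemma cont_b:
  assumes sol: "is_solution k T \<xi>" and "s \<in> tint T" "t \<in> tint T"
  shows "continuous_on {s..t} (\<lambda>\<tau>. bcoef k (\<xi> \<tau>) i)"
proof -
  have "continuous_on (tint T) (\<lambda>\<tau>. bcoef k (\<xi> \<tau>) i)"
    using deriv_b[OF sol] by (intro cont_of_deriv) blast
  thus ?thesis using tint_sub[OF assms(2,3)] continuous_on_subset by blast
qed

lemma Bmax_mono:
  assumes sol: "is_solution k T \<xi>" and s: "s \<in> tint T" and t: "t \<in> tint T" and st: "s \<le> t"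
  shows "Bmax k (\<xi> t) \<le> Bmax k (\<xi> s)"
proof (rule max_noninc[where J = "{1..k+1}" and f = "\<lambda>j \<tau>. bcoef k (\<xi> \<tau>) j" and M = "\<lambda>\<tau>. Bmax k (\<xi> \<tau>)"])
  show "\<forall>j\<in>{1..k + 1}. continuous_on {s..t} (\<lambda>\<tau>. bcoef k (\<xi> \<tau>) j)"
    using cont_b[OF sol s t] by blast
  show "\<forall>\<tau>\<in>{s..t}. \<forall>j\<in>{1..k + 1}. bcoef k (\<xi> \<tau>) j \<le> Bmax k (\<xi> \<tau>)"
    using Bmax_ge by blast
  show "\<forall>\<tau>\<in>{s..t}. \<exists>j\<in>{1..k + 1}. bcoef k (\<xi> \<tau>) j = Bmax k (\<xi> \<tau>)"
    using Bmax_att by blast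
  show "\<forall>\<tau>\<in>{s..<t}. \<forall>j\<in>{1..k + 1}. bcoef k (\<xi> \<tau>) j = Bmax k (\<xi> \<tau>) \<longrightarrow>
     (\<exists>D\<le>0. ((\<lambda>\<tau>. bcoef k (\<xi> \<tau>) j) has_real_derivative D) (at \<tau> within {s..t}))"
  proof (intro ballI impI)
    fix \<tau> j assume tau: "\<tau> \<in> {s..<t}" and j: "j \<in> {1..k+1}" and eqm: "bcoef k (\<xi> \<tau>) j = Bmax k (\<xi> \<tau>)"
    have tauT: "\<tau> \<in> tint T" using tint_between[OF s t] tau by auto
    let ?D = "cc k (\<xi> \<tau>) j * (bcoef k (\<xi> \<tau>) (Suc j) - 2 * bcoef k (\<xi> \<tau>) j + bcoef k (\<xi> \<tau>) (j - 1))"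
    have "?D \<le> 0"
    proof (cases "2 \<le> j \<and> j \<le> k")
      case True
      have "bcoef k (\<xi> \<tau>) (Suc j) \<le> Bmax k (\<xi> \<tau>)" "bcoef k (\<xi> \<tau>) (j - 1) \<le> Bmax k (\<xi> \<tau>)"
        using True by (auto intro!: Bmax_ge)
      hence "bcoef k (\<xi> \<tau>) (Suc j) - 2 * bcoef k (\<xi> \<tau>) j + bcoef k (\<xi> \<tau>) (j - 1) \<le> 0"
        using eqm by linarith
      thus ?thesis using cc_nonneg by (intro mult_nonneg_nonpos) auto
    next
      case False
      hence "cc k (\<xi> \<tau>) j = 0" unfolding cc_def by presburger
      thus ?thesis by simp
    qed
    moreover have "((\<lambda>\<tau>. bcoef k (\<xi> \<tau>) j) has_real_derivative ?D) (at \<tau> within {s..t})"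
      using deriv_b[OF sol tauT] tint_sub[OF s t] by (rule DERIV_subset)
    ultimately show "\<exists>D\<le>0. ((\<lambda>\<tau>. bcoef k (\<xi> \<tau>) j) has_real_derivative D) (at \<tau> within {s..t})"
      by blast
  qed
qed (use st in auto)

lemma bmin_mono:
  assumes sol: "is_solution k T \<xi>" and s: "s \<in> tint T" and t: "t \<in> tint T" and st: "s \<le> t"
  shows "- bmin k (\<xi> t) \<le> - bmin k (\<xi> s)"
proof (rule max_noninc[where J = "{1..k+1}" and f = "\<lambda>j \<tau>. - bcoef k (\<xi> \<tau>) j" and M = "\<lambda>\<tau>. - bmin k (\<xi> \<tau>)"])
  show "\<forall>j\<in>{1..k + 1}. continuous_on {s..t} (\<lambda>\<tau>. - bcoef k (\<xi> \<tau>) j)"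
    using cont_b[OF sol s t] by (auto intro: continuous_intros)
  show "\<forall>\<tau>\<in>{s..t}. \<forall>j\<in>{1..k + 1}. - bcoef k (\<xi> \<tau>) j \<le> - bmin k (\<xi> \<tau>)"
    using bmin_le by fastforce
  show "\<forall>\<tau>\<in>{s..t}. \<exists>j\<in>{1..k + 1}. - bcoef k (\<xi> \<tau>) j = - bmin k (\<xi> \<tau>)"
    using bmin_att by fastforce
  show "\<forall>\<tau>\<in>{s..<t}. \<forall>j\<in>{1..k + 1}. - bcoef k (\<xi> \<tau>) j = - bmin k (\<xi> \<tau>) \<longrightarrow>
     (\<exists>D\<le>0. ((\<lambda>\<tau>. - bcoef k (\<xi> \<tau>) j) has_real_derivative D) (at \<tau> within {s..t}))"
  proof (intro ballI impI)
    fix \<tau> j assume tau: "\<tau> \<in> {s..<t}" and j: "j \<in> {1..k+1}" and eqm': "- bcoef k (\<xi> \<tau>) j = - bmin k (\<xi> \<tau>)"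
    hence eqm: "bcoef k (\<xi> \<tau>) j = bmin k (\<xi> \<tau>)" by simp
    have tauT: "\<tau> \<in> tint T" using tint_between[OF s t] tau by auto
    let ?D = "cc k (\<xi> \<tau>) j * (bcoef k (\<xi> \<tau>) (Suc j) - 2 * bcoef k (\<xi> \<tau>) j + bcoef k (\<xi> \<tau>) (j - 1))"
    have "?D \<ge> 0"
    proof (cases "2 \<le> j \<and> j \<le> k")
      case True
      have "bmin k (\<xi> \<tau>) \<le> bcoef k (\<xi> \<tau>) (Suc j)" "bmin k (\<xi> \<tau>) \<le> bcoef k (\<xi> \<tau>) (j - 1)"
        using True by (auto intro!: bmin_le)
      hence "bcoef k (\<xi> \<tau>) (Suc j) - 2 * bcoef k (\<xi> \<tau>) j + bcoef k (\<xi> \<tau>) (j - 1) \<ge> 0"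
        using eqm by linarith
      thus ?thesis using cc_nonneg by (intro mult_nonneg_nonneg) auto
    next
      case False
      hence "cc k (\<xi> \<tau>) j = 0" unfolding cc_def by presburger
      thus ?thesis by simp
    qed
    moreover have "((\<lambda>\<tau>. bcoef k (\<xi> \<tau>) j) has_real_derivative ?D) (at \<tau> within {s..t})"
      using deriv_b[OF sol tauT] tint_sub[OF s t] by (rule DERIV_subset)
    hence "((\<lambda>\<tau>. - bcoef k (\<xi> \<tau>) j) has_real_derivative - ?D) (at \<tau> within {s..t})"
      by (auto intro!: derivative_eq_intros)
    ultimately show "\<exists>D\<le>0. ((\<lambda>\<tau>. - bcoef k (\<xi> \<tau>) j) has_real_derivative D) (at \<tau> within {s..t})"
      by (intro exI[of _ "- ?D"]) auto
  qed
qed (use st in auto)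

lemma sum_const:
  assumes sol: "is_solution k T \<xi>" and k: "k \<ge> 1" and t: "t \<in> tint T"
  shows "(\<Sum>i=1..k. \<xi> t i) = (\<Sum>i=1..k. \<xi> 0 i)"
proof -
  have z: "0 \<in> tint T" using zero_tint[OF sol] .
  have t0: "0 \<le> t" using t unfolding tint_def by auto
  have vs: "(\<Sum>i=1..k. vfield k x i) = 0" for x
  proof -
    have "(\<Sum>i=1..k. vfield k x i) = bcoef k x 1 - bcoef k x (Suc k)"
      unfolding vfield_def using telescope[of "bcoef k x" k] by simp
    thus ?thesis by (simp add: bcoef_out)
  qed
  have der: "((\<lambda>s. \<Sum>i=1..k. \<xi> s i) has_real_derivative 0) (at \<tau> within {0..t})" if "\<tau> \<in> {0..t}" for \<tau>
  proof -
    have tauT: "\<tau> \<in> tint T" using tint_between[OF z t] that by auto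
    have "((\<lambda>s. \<Sum>i=1..k. \<xi> s i) has_real_derivative (\<Sum>i=1..k. vfield k (\<xi> \<tau>) i)) (at \<tau> within tint T)"
      using sol tauT unfolding is_solution_def by (intro DERIV_sum) auto
    thus ?thesis using vs tint_sub[OF z t] by (auto elim: DERIV_subset)
  qed
  have c1: "continuous_on {0..t} (\<lambda>s. \<Sum>i=1..k. \<xi> s i)" using der by (intro cont_of_deriv) blast
  have a: "(\<Sum>i=1..k. \<xi> t i) \<le> (\<Sum>i=1..k. \<xi> 0 i)"
    by (rule max_noninc[where J = "{0::nat}" and f = "\<lambda>_ s. \<Sum>i=1..k. \<xi> s i" and M = "\<lambda>s. \<Sum>i=1..k. \<xi> s i"])
       (use t0 c1 der in auto)
  have b: "- (\<Sum>i=1..k. \<xi> t i) \<le> - (\<Sum>i=1..k. \<xi> 0 i)"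
  proof (rule max_noninc[where J = "{0::nat}" and f = "\<lambda>_ s. - (\<Sum>i=1..k. \<xi> s i)" and M = "\<lambda>s. - (\<Sum>i=1..k. \<xi> s i)"])
    show "\<forall>j\<in>{0::nat}. continuous_on {0..t} (\<lambda>s. - (\<Sum>i=1..k. \<xi> s i))"
      using c1 by (auto intro: continuous_intros)
    show "\<forall>\<tau>\<in>{0..<t}. \<forall>j\<in>{0::nat}. - (\<Sum>i=1..k. \<xi> \<tau> i) = - (\<Sum>i = 1..k. \<xi> \<tau> i) \<longrightarrow>
        (\<exists>D\<le>0. ((\<lambda>s. - (\<Sum>i=1..k. \<xi> s i)) has_real_derivative D) (at \<tau> within {0..t}))"
    proof (intro ballI impI)
      fix \<tau> :: real and j :: nat assume "\<tau> \<in> {0..<t}"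
      hence "((\<lambda>s. \<Sum>i=1..k. \<xi> s i) has_real_derivative 0) (at \<tau> within {0..t})" using der by auto
      hence "((\<lambda>s. - (\<Sum>i=1..k. \<xi> s i)) has_real_derivative - 0) (at \<tau> within {0..t})"
        by (rule DERIV_minus)
      thus "\<exists>D\<le>0. ((\<lambda>s. - (\<Sum>i=1..k. \<xi> s i)) has_real_derivative D) (at \<tau> within {0..t})"
        by (intro exI[of _ 0]) simp
    qed
  qed (use t0 in auto)
  from a b show ?thesis by linarith
qed



lemma Bmax_const_zero:
  assumes sol: "is_solution k T \<xi>" and s: "s \<in> tint T" and t: "t \<in> tint T"
    and hB: "\<forall>y\<in>{s..t}. Bmax k (\<xi> y) = Bmax k (\<xi> s)" and tau: "s < \<tau>" "\<tau> < t"
  shows "Bmax k (\<xi> \<tau>) \<le> 0"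
proof (rule ccontr)
  assume "\<not> Bmax k (\<xi> \<tau>) \<le> 0"
  hence Mpos: "Bmax k (\<xi> \<tau>) > 0" by simp
  define M where "M = Bmax k (\<xi> \<tau>)"
  define P where "P j \<longleftrightarrow> j \<in> {1..k+1} \<and> bcoef k (\<xi> \<tau>) j = M" for j
  obtain j where "P j" using Bmax_att unfolding P_def M_def by blast
  define j0 where "j0 = (LEAST j. P j)"
  have Pj0: "P j0" unfolding j0_def using \<open>P j\<close> by (rule LeastI)
  have j0r: "2 \<le> j0 \<and> j0 \<le> k"
  proof (rule ccontr)
    assume "\<not> (2 \<le> j0 \<and> j0 \<le> k)"
    hence "bcoef k (\<xi> \<tau>) j0 = 0" by (rule bcoef_out)
    thus False using Pj0 Mpos unfolding P_def M_def by auto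
  qed
  have s0: "0 \<le> s" using s unfolding tint_def by auto
  have tauT: "\<tau> \<in> tint T" using tint_between[OF s t] tau by auto
  let ?D = "cc k (\<xi> \<tau>) j0 * (bcoef k (\<xi> \<tau>) (Suc j0) - 2 * bcoef k (\<xi> \<tau>) j0 + bcoef k (\<xi> \<tau>) (j0 - 1))"
  have "((\<lambda>s. bcoef k (\<xi> s) j0) has_real_derivative ?D) (at \<tau>)"
    using deriv_b[OF sol tauT, of j0] tint_at[OF t, of \<tau>] tau s0 by simp
  moreover have "\<forall>y. \<bar>\<tau> - y\<bar> < min (\<tau> - s) (t - \<tau>) \<longrightarrow> bcoef k (\<xi> y) j0 \<le> bcoef k (\<xi> \<tau>) j0"
  proof (intro allI impI)
    fix y assume "\<bar>\<tau> - y\<bar> < min (\<tau> - s) (t - \<tau>)"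
    hence "y \<in> {s..t}" by auto
    hence e1: "Bmax k (\<xi> y) = Bmax k (\<xi> s)" by (rule bspec[OF hB])
    have "\<tau> \<in> {s..t}" using tau by auto
    hence e2: "Bmax k (\<xi> \<tau>) = Bmax k (\<xi> s)" by (rule bspec[OF hB])
    from e1 e2 have "Bmax k (\<xi> y) = Bmax k (\<xi> \<tau>)" by linarith
    moreover have "bcoef k (\<xi> y) j0 \<le> Bmax k (\<xi> y)" using Pj0 unfolding P_def by (auto intro: Bmax_ge)
    ultimately show "bcoef k (\<xi> y) j0 \<le> bcoef k (\<xi> \<tau>) j0" using Pj0 unfolding P_def M_def by auto
  qed
  moreover have "0 < min (\<tau> - s) (t - \<tau>)" using tau by auto
  ultimately have "?D = 0" by (meson DERIV_local_max)
  moreover have "cc k (\<xi> \<tau>) j0 > 0" using j0r by (intro cc_pos) auto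
  ultimately have lap: "bcoef k (\<xi> \<tau>) (Suc j0) - 2 * bcoef k (\<xi> \<tau>) j0 + bcoef k (\<xi> \<tau>) (j0 - 1) = 0" by simp
  have "bcoef k (\<xi> \<tau>) (Suc j0) \<le> M" "bcoef k (\<xi> \<tau>) (j0 - 1) \<le> M"
    using j0r unfolding M_def by (auto intro!: Bmax_ge)
  hence "bcoef k (\<xi> \<tau>) (j0 - 1) = M" using lap Pj0 unfolding P_def by linarith
  hence "P (j0 - 1)" using j0r unfolding P_def by auto
  moreover have "j0 - 1 < j0" using j0r by auto
  ultimately show False unfolding j0_def using not_less_Least by blast
qed

lemma bmin_const_zero:
  assumes sol: "is_solution k T \<xi>" and s: "s \<in> tint T" and t: "t \<in> tint T"
    and hB: "\<forall>y\<in>{s..t}. bmin k (\<xi> y) = bmin k (\<xi> s)" and tau: "s < \<tau>" "\<tau> < t"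
  shows "bmin k (\<xi> \<tau>) \<ge> 0"
proof (rule ccontr)
  assume "\<not> bmin k (\<xi> \<tau>) \<ge> 0"
  hence Mpos: "bmin k (\<xi> \<tau>) < 0" by simp
  define M where "M = bmin k (\<xi> \<tau>)"
  define P where "P j \<longleftrightarrow> j \<in> {1..k+1} \<and> bcoef k (\<xi> \<tau>) j = M" for j
  obtain j where "P j" using bmin_att unfolding P_def M_def by blast
  define j0 where "j0 = (LEAST j. P j)"
  have Pj0: "P j0" unfolding j0_def using \<open>P j\<close> by (rule LeastI)
  have j0r: "2 \<le> j0 \<and> j0 \<le> k"
  proof (rule ccontr)
    assume "\<not> (2 \<le> j0 \<and> j0 \<le> k)"
    hence "bcoef k (\<xi> \<tau>) j0 = 0" by (rule bcoef_out)
    thus False using Pj0 Mpos unfolding P_def M_def by auto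
  qed
  have s0: "0 \<le> s" using s unfolding tint_def by auto
  have tauT: "\<tau> \<in> tint T" using tint_between[OF s t] tau by auto
  let ?D = "cc k (\<xi> \<tau>) j0 * (bcoef k (\<xi> \<tau>) (Suc j0) - 2 * bcoef k (\<xi> \<tau>) j0 + bcoef k (\<xi> \<tau>) (j0 - 1))"
  have "((\<lambda>s. bcoef k (\<xi> s) j0) has_real_derivative ?D) (at \<tau>)"
    using deriv_b[OF sol tauT, of j0] tint_at[OF t, of \<tau>] tau s0 by simp
  moreover have "\<forall>y. \<bar>\<tau> - y\<bar> < min (\<tau> - s) (t - \<tau>) \<longrightarrow> bcoef k (\<xi> \<tau>) j0 \<le> bcoef k (\<xi> y) j0"
  proof (intro allI impI)
    fix y assume "\<bar>\<tau> - y\<bar> < min (\<tau> - s) (t - \<tau>)"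
    hence "y \<in> {s..t}" by auto
    hence e1: "bmin k (\<xi> y) = bmin k (\<xi> s)" by (rule bspec[OF hB])
    have "\<tau> \<in> {s..t}" using tau by auto
    hence e2: "bmin k (\<xi> \<tau>) = bmin k (\<xi> s)" by (rule bspec[OF hB])
    from e1 e2 have "bmin k (\<xi> y) = bmin k (\<xi> \<tau>)" by linarith
    moreover have "bmin k (\<xi> y) \<le> bcoef k (\<xi> y) j0" using Pj0 unfolding P_def by (auto intro: bmin_le)
    ultimately show "bcoef k (\<xi> \<tau>) j0 \<le> bcoef k (\<xi> y) j0" using Pj0 unfolding P_def M_def by auto
  qed
  moreover have "0 < min (\<tau> - s) (t - \<tau>)" using tau by auto
  ultimately have "?D = 0" by (meson DERIV_local_min)
  moreover have "cc k (\<xi> \<tau>) j0 > 0" using j0r by (intro cc_pos) auto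
  ultimately have lap: "bcoef k (\<xi> \<tau>) (Suc j0) - 2 * bcoef k (\<xi> \<tau>) j0 + bcoef k (\<xi> \<tau>) (j0 - 1) = 0" by simp
  have "M \<le> bcoef k (\<xi> \<tau>) (Suc j0)" "M \<le> bcoef k (\<xi> \<tau>) (j0 - 1)"
    using j0r unfolding M_def by (auto intro!: bmin_le)
  hence "bcoef k (\<xi> \<tau>) (j0 - 1) = M" using lap Pj0 unfolding P_def by linarith
  hence "P (j0 - 1)" using j0r unfolding P_def by auto
  moreover have "j0 - 1 < j0" using j0r by auto
  ultimately show False unfolding j0_def using not_less_Least by blast
qed



lemma sum_lin: "(\<Sum>i\<in>A. - (L * (6 * a i + p i + q i))) = - (L * (6 * (\<Sum>i\<in>A. a i) + (\<Sum>i\<in>A. p i) + (\<Sum>i\<in>A. q i)))"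
  for L :: real
proof -
  have "(\<Sum>i\<in>A. - (L * (6 * a i + p i + q i))) = - (\<Sum>i\<in>A. L * (6 * a i + p i + q i))"
    by (rule sum_negf)
  also have "(\<Sum>i\<in>A. L * (6 * a i + p i + q i)) = L * (\<Sum>i\<in>A. 6 * a i + p i + q i)"
    by (rule sum_distrib_left[symmetric])
  also have "(\<Sum>i\<in>A. 6 * a i + p i + q i) = (\<Sum>i\<in>A. 6 * a i) + (\<Sum>i\<in>A. p i) + (\<Sum>i\<in>A. q i)"
    by (simp add: sum.distrib)
  also have "(\<Sum>i\<in>A. 6 * a i) = 6 * (\<Sum>i\<in>A. a i)" by (rule sum_distrib_left[symmetric])
  finally show ?thesis .
qed

lemma lin8: "- (L * (6 * S + S + S)) = - ((8 * L) * S)" for L S :: real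
  by (simp add: algebra_simps)

lemma back_zero:
  assumes sol: "is_solution k T \<xi>" and tau: "\<tau> \<in> tint T"
    and hz: "\<forall>i\<in>{1..k+1}. bcoef k (\<xi> \<tau>) i = 0" and y: "y \<in> tint T" "y \<le> \<tau>"
  shows "\<forall>i\<in>{1..k+1}. bcoef k (\<xi> y) i = 0"
proof -
  have z: "0 \<in> tint T" using zero_tint[OF sol] .
  define K where "K = Bmax k (\<xi> 0) - bmin k (\<xi> 0)"
  have K0: "0 \<le> K" unfolding K_def using Bmax_nonneg[of k "\<xi> 0"] bmin_nonpos[of k "\<xi> 0"] by linarith
  have bnd: "\<bar>bcoef k (\<xi> x) i\<bar> \<le> K" if x: "x \<in> tint T" for x i
  proof (cases "i \<in> {1..k+1}")
    case True
    have x0: "0 \<le> x" using x unfolding tint_def by auto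
    have "bcoef k (\<xi> x) i \<le> Bmax k (\<xi> x)" using True by (rule Bmax_ge)
    also have "\<dots> \<le> Bmax k (\<xi> 0)" using Bmax_mono[OF sol z x x0] .
    finally have a: "bcoef k (\<xi> x) i \<le> K" unfolding K_def using bmin_nonpos[of k "\<xi> 0"] by linarith
    have "bmin k (\<xi> x) \<le> bcoef k (\<xi> x) i" using True by (rule bmin_le)
    moreover have "- bmin k (\<xi> x) \<le> - bmin k (\<xi> 0)" using bmin_mono[OF sol z x x0] .
    ultimately have "- K \<le> bcoef k (\<xi> x) i" unfolding K_def using Bmax_nonneg[of k "\<xi> 0"] by linarith
    thus ?thesis using a by auto
  next
    case False
    hence "bcoef k (\<xi> x) i = 0" by (intro bcoef_out) auto
    thus ?thesis using K0 by simp
  qed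
  define L where "L = K + real k * real k"
  define C where "C = 8 * L"
  define E where "E x = (\<Sum>i=1..k+1. (bcoef k (\<xi> x) i)\<^sup>2)" for x
  define lap where "lap x i = cc k (\<xi> x) i * (bcoef k (\<xi> x) (Suc i) - 2 * bcoef k (\<xi> x) i + bcoef k (\<xi> x) (i - 1))" for x i
  define dE where "dE x = (\<Sum>i=1..k+1. 2 * bcoef k (\<xi> x) i * lap x i)" for x
  have derE: "(E has_real_derivative dE x) (at x within tint T)" if x: "x \<in> tint T" for x
    unfolding E_def dE_def
  proof (rule DERIV_sum)
    fix i
    have "((\<lambda>s. bcoef k (\<xi> s) i) has_real_derivative lap x i) (at x within tint T)"
      unfolding lap_def by (rule deriv_b[OF sol x])
    thus "((\<lambda>s. (bcoef k (\<xi> s) i)\<^sup>2) has_real_derivative 2 * bcoef k (\<xi> x) i * lap x i) (at x within tint T)"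
      by (auto intro!: derivative_eq_intros)
  qed
  have dEb: "dE x \<ge> - (C * E x)" if x: "x \<in> tint T" for x
  proof -
    let ?g = "\<lambda>i. (bcoef k (\<xi> x) i)\<^sup>2"
    have "dE x \<ge> (\<Sum>i=1..k+1. - (L * (6 * ?g i + ?g (Suc i) + ?g (i - 1))))"
      unfolding dE_def lap_def
    proof (rule sum_mono)
      fix i
      have "bcoef k (\<xi> x) i \<le> K" using bnd[OF x, of i] by simp
      hence "cc k (\<xi> x) i \<le> L" unfolding L_def using K0 by (rule cc_le)
      thus "- (L * (6 * ?g i + ?g (Suc i) + ?g (i - 1))) \<le>
        2 * bcoef k (\<xi> x) i * (cc k (\<xi> x) i * (bcoef k (\<xi> x) (Suc i) - 2 * bcoef k (\<xi> x) i + bcoef k (\<xi> x) (i - 1)))"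
        using cc_nonneg by (intro term_bound) auto
    qed
    also have "(\<Sum>i=1..k+1. - (L * (6 * ?g i + ?g (Suc i) + ?g (i - 1))))
       = - (L * (6 * (\<Sum>i=1..k+1. ?g i) + (\<Sum>i=1..k+1. ?g (Suc i)) + (\<Sum>i=1..k+1. ?g (i - 1))))"
      by (rule sum_lin)
    also have g1: "(\<Sum>i=1..k+1. ?g (Suc i)) = (\<Sum>i=1..k+1. ?g i)"
    proof -
      have "?g 1 = 0" using bcoef_out[of 1 k "\<xi> x"] by simp
      moreover have "?g (Suc (k+1)) = 0" using bcoef_out[of "Suc (k+1)" k "\<xi> x"] by simp
      ultimately show ?thesis using shift_up[of ?g "k+1"] by linarith
    qed
    also have "(\<Sum>i=1..k+1. ?g (i - 1)) = (\<Sum>i=1..k+1. ?g i)"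
    proof -
      have "?g 0 = 0" using bcoef_out[of 0 k "\<xi> x"] by simp
      moreover have "?g (k+1) = 0" using bcoef_out[of "k+1" k "\<xi> x"] by simp
      ultimately show ?thesis using shift_down[of ?g "k+1"] by linarith
    qed
    also have "- (L * (6 * (\<Sum>i=1..k+1. ?g i) + (\<Sum>i=1..k+1. ?g i) + (\<Sum>i=1..k+1. ?g i)))
        = - (C * (\<Sum>i=1..k+1. ?g i))" unfolding C_def by (rule lin8)
    also have "(\<Sum>i=1..k+1. ?g i) = E x" unfolding E_def ..
    finally show ?thesis .
  qed
  define h where "h x = - (E x * exp (C * x))" for x
  have derh: "(h has_real_derivative - (dE x * exp (C * x) + E x * (exp (C * x) * C))) (at x within tint T)"
    if x: "x \<in> tint T" for x
    unfolding h_def by (auto intro!: derivative_eq_intros derE[OF x])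
  have dh0: "- (dE x * exp (C * x) + E x * (exp (C * x) * C)) \<le> 0" if x: "x \<in> tint T" for x
  proof -
    have "dE x + C * E x \<ge> 0" using dEb[OF x] by linarith
    hence "(dE x + C * E x) * exp (C * x) \<ge> 0" by simp
    thus ?thesis by (simp add: algebra_simps)
  qed
  have sub: "{y..\<tau>} \<subseteq> tint T" using tint_sub[OF y(1) tau] .
  have contH: "continuous_on {y..\<tau>} h"
    using derh sub by (intro cont_of_deriv) (blast intro: DERIV_subset)
  have "h \<tau> \<le> h y"
  proof (rule max_noninc[where J = "{0::nat}" and f = "\<lambda>_. h" and M = h])
    show "\<forall>\<tau>'\<in>{y..<\<tau>}. \<forall>j\<in>{0::nat}. h \<tau>' = h \<tau>' \<longrightarrow>
       (\<exists>D\<le>0. (h has_real_derivative D) (at \<tau>' within {y..\<tau>}))"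
    proof (intro ballI impI)
      fix x assume "x \<in> {y..<\<tau>}"
      hence x: "x \<in> tint T" using sub by auto
      show "\<exists>D\<le>0. (h has_real_derivative D) (at x within {y..\<tau>})"
        using dh0[OF x] DERIV_subset[OF derh[OF x] sub] by blast
    qed
  qed (use contH y in auto)
  moreover have "E \<tau> = 0" unfolding E_def using hz by simp
  ultimately have "E y * exp (C * y) \<le> 0" unfolding h_def by simp
  hence "E y \<le> 0" by (simp add: mult_le_0_iff)
  moreover have "E y \<ge> 0" unfolding E_def by (intro sum_nonneg) auto
  ultimately have "E y = 0" by simp
  hence "\<forall>i\<in>{1..k+1}. (bcoef k (\<xi> y) i)\<^sup>2 = 0" unfolding E_def
    by (subst (asm) sum_nonneg_eq_0_iff) auto
  thus ?thesis by simp
qed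



theorem proposition2p1:
  fixes k :: nat
  assumes "k \<ge> 2"
  shows "(\<forall>\<xi> :: nat \<Rightarrow> real. critical_point k \<xi> \<and> (\<Sum>i=1..k. \<xi> i) = 0
            \<longrightarrow> (\<forall>i\<in>{1..k}. \<xi> i = 0))
       \<and> (\<forall>(\<xi> :: real \<Rightarrow> nat \<Rightarrow> real) T.
            is_maximal_solution k T \<xi> \<and> (\<Sum>i=1..k. \<xi> 0 i) = 0 \<longrightarrow>
              (\<forall>s\<in>tint T. \<forall>t\<in>tint T. s \<le> t \<longrightarrow>
                  Bmax k (\<xi> t) \<le> Bmax k (\<xi> s) \<and> - bmin k (\<xi> t) \<le> - bmin k (\<xi> s))
            \<and> ((\<forall>t\<in>tint T. \<forall>i\<in>{1..k}. \<xi> t i = 0) \<or>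
               (\<forall>s\<in>tint T. \<forall>t\<in>tint T. s < t \<longrightarrow>
                  Bmax k (\<xi> t) - bmin k (\<xi> t) < Bmax k (\<xi> s) - bmin k (\<xi> s))))"
proof (intro conjI allI impI)
  have k1: "k \<ge> 1" using assms by simp
  fix \<xi> :: "nat \<Rightarrow> real"
  assume a: "critical_point k \<xi> \<and> (\<Sum>i=1..k. \<xi> i) = 0"
  have cp: "\<forall>i\<in>{1..k}. bcoef k \<xi> i = bcoef k \<xi> (Suc i)"
    using a unfolding critical_point_def vfield_def by auto
  have "1 \<le> i \<longrightarrow> i \<le> k + 1 \<longrightarrow> bcoef k \<xi> i = 0" for i
  proof (induction i)
    case (Suc i)
    show ?case
    proof (cases "i = 0")
      case True thus ?thesis by (simp add: bcoef_out)
    next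
      case False thus ?thesis using Suc cp by auto
    qed
  qed simp
  hence "\<forall>i\<in>{2..k}. bcoef k \<xi> i = 0" by auto
  hence "\<forall>i\<in>{1..k}. \<xi> i = \<xi> 1" by (rule const_of_bzero)
  moreover have "(\<Sum>i=1..k. \<xi> i) = 0" using a by blast
  ultimately show "\<forall>i\<in>{1..k}. \<xi> i = 0" using k1 by (rule zero_of_const)
next
  have k1: "k \<ge> 1" using assms by simp
  fix \<xi> :: "real \<Rightarrow> nat \<Rightarrow> real" and T
  assume a: "is_maximal_solution k T \<xi> \<and> (\<Sum>i=1..k. \<xi> 0 i) = 0"
  hence sol: "is_solution k T \<xi>" and sum0: "(\<Sum>i=1..k. \<xi> 0 i) = 0"
    unfolding is_maximal_solution_def by auto
  show "\<forall>s\<in>tint T. \<forall>t\<in>tint T. s \<le> t \<longrightarrow>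
          Bmax k (\<xi> t) \<le> Bmax k (\<xi> s) \<and> - bmin k (\<xi> t) \<le> - bmin k (\<xi> s)"
    using Bmax_mono[OF sol] bmin_mono[OF sol] by blast
  show "(\<forall>t\<in>tint T. \<forall>i\<in>{1..k}. \<xi> t i = 0) \<or>
        (\<forall>s\<in>tint T. \<forall>t\<in>tint T. s < t \<longrightarrow>
           Bmax k (\<xi> t) - bmin k (\<xi> t) < Bmax k (\<xi> s) - bmin k (\<xi> s))"
  proof (cases "\<forall>t\<in>tint T. \<forall>i\<in>{1..k}. \<xi> t i = 0")
    case True thus ?thesis by blast
  next
    case False
    then obtain t0 i0 where t0: "t0 \<in> tint T" and i0: "i0 \<in> {1..k}" and nz: "\<xi> t0 i0 \<noteq> 0" by blast
    have "\<forall>s\<in>tint T. \<forall>t\<in>tint T. s < t \<longrightarrow>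
           Bmax k (\<xi> t) - bmin k (\<xi> t) < Bmax k (\<xi> s) - bmin k (\<xi> s)"
    proof (intro ballI impI)
      fix s t assume s: "s \<in> tint T" and t: "t \<in> tint T" and st: "s < t"
      show "Bmax k (\<xi> t) - bmin k (\<xi> t) < Bmax k (\<xi> s) - bmin k (\<xi> s)"
      proof (rule ccontr)
        assume neg: "\<not> ?thesis"
        have m1: "Bmax k (\<xi> t) \<le> Bmax k (\<xi> s)" using Bmax_mono[OF sol s t] st by auto
        have m2: "- bmin k (\<xi> t) \<le> - bmin k (\<xi> s)" using bmin_mono[OF sol s t] st by auto
        have hB: "\<forall>y\<in>{s..t}. Bmax k (\<xi> y) = Bmax k (\<xi> s)"
        proof
          fix y assume "y \<in> {s..t}"
          hence yT: "y \<in> tint T" and "s \<le> y" "y \<le> t" using tint_between[OF s t] by auto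
          thus "Bmax k (\<xi> y) = Bmax k (\<xi> s)"
            using Bmax_mono[OF sol s yT] Bmax_mono[OF sol yT t] bmin_mono[OF sol s yT] bmin_mono[OF sol yT t]
              m1 m2 neg by linarith
        qed
        have hb: "\<forall>y\<in>{s..t}. bmin k (\<xi> y) = bmin k (\<xi> s)"
        proof
          fix y assume "y \<in> {s..t}"
          hence yT: "y \<in> tint T" and "s \<le> y" "y \<le> t" using tint_between[OF s t] by auto
          thus "bmin k (\<xi> y) = bmin k (\<xi> s)"
            using Bmax_mono[OF sol s yT] Bmax_mono[OF sol yT t] bmin_mono[OF sol s yT] bmin_mono[OF sol yT t]
              m1 m2 neg by linarith
        qed
        define \<tau> where "\<tau> = (s + t) / 2"
        have tau: "s < \<tau>" "\<tau> < t" using st unfolding \<tau>_def by auto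
        have tauT: "\<tau> \<in> tint T" using tint_between[OF s t] tau by auto
        have "Bmax k (\<xi> \<tau>) \<le> 0" by (rule Bmax_const_zero[OF sol s t hB tau])
        moreover have "bmin k (\<xi> \<tau>) \<ge> 0" by (rule bmin_const_zero[OF sol s t hb tau])
        ultimately have hz: "\<forall>i\<in>{1..k+1}. bcoef k (\<xi> \<tau>) i = 0"
          using Bmax_ge[of _ k "\<xi> \<tau>"] bmin_le[of _ k "\<xi> \<tau>"] by fastforce
        have allz: "\<forall>i\<in>{1..k+1}. bcoef k (\<xi> y) i = 0" if yT: "y \<in> tint T" for y
        proof (cases "y \<le> \<tau>")
          case True thus ?thesis by (rule back_zero[OF sol tauT hz yT])
        next
          case False
          hence "Bmax k (\<xi> y) \<le> Bmax k (\<xi> \<tau>)" "- bmin k (\<xi> y) \<le> - bmin k (\<xi> \<tau>)"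
            using Bmax_mono[OF sol tauT yT] bmin_mono[OF sol tauT yT] by auto
          moreover have "Bmax k (\<xi> \<tau>) = 0" "bmin k (\<xi> \<tau>) = 0"
            using hz Bmax_att[of k "\<xi> \<tau>"] bmin_att[of k "\<xi> \<tau>"] by auto
          ultimately show ?thesis
            using Bmax_ge[of _ k "\<xi> y"] bmin_le[of _ k "\<xi> y"] by fastforce
        qed
        have "\<forall>i\<in>{2..k}. bcoef k (\<xi> t0) i = 0" using allz[OF t0] by auto
        hence "\<forall>i\<in>{1..k}. \<xi> t0 i = \<xi> t0 1" by (rule const_of_bzero)
        moreover have "(\<Sum>i=1..k. \<xi> t0 i) = 0" using sum_const[OF sol k1 t0] sum0 by simp
        ultimately have "\<forall>i\<in>{1..k}. \<xi> t0 i = 0" using k1 by (rule zero_of_const)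
        thus False using i0 nz by auto
      qed
    qed
    thus ?thesis by blast
  qed
qed


end
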